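(* Let $s\ge2$. Let $V_0$ be the set of vertices reachable from $v_0=(\mathbf 0,+1)$ in the Markov chain below, and $G_0$ the directed graph on $V_0$ with an edge $v\to v'$ whenever $P(v,v')>0$. Then $V_0$ is finite, $G_0$ is strongly connected, $G_0$ is aperiodic (the greatest common divisor of the lengths of its directed cycles is $1$), and $G_0$ is preserved by the map $\mathcal R(\mathbf u,\sigma)=(\mathbf u,-\sigma)$, i.e. $\mathcal R(V_0)=V_0$.
   Context: Vertices are pairs $(\mathbf u,\sigma)$ with $\mathbf u=(u_\omega)_{\omega\in\{0,1\}^s}\in\mathbb{Z}^{\{0,1\}^s}$ and $\sigma\in\{\pm1\}$. For $\mathbf e=(e_0,\dots,e_s)\in\{0,1\}^{s+1}$ let $\delta(\mathbf u;\mathbf e)_\omega=\lfloor (u_\omega+e_0+\sum_{i=1}^s\omega_ie_i)/2\rfloor$, and $|\mathbf u|=\sum_\omega|u_\omega|$. Transition probabilities: $P((\mathbf u,\sigma),(\mathbf u',\sigma'))=\mathbb{P}_{\mathbf e}(\delta(\mathbf u;\mathbf e)=\mathbf u')$ if $\sigma'=\sigma(-1)^{|\mathbf u|}$, and $0$ otherwise, where $\mathbf e$ is uniformly distributed on $\{0,1\}^{s+1}$. A vertex $v'$ is reachable from $v$ if there is a directed path (possibly of length $0$) from $v$ to $v'$ along edges with positive transition probability. *)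

theory Defs
  imports Complex_Main
begin

text \<open>Indices \<omega> \<in> {0,1}^s are bool lists of length s (\<omega>_i = w!(i-1)).
  A configuration u is a function on bool lists, required (where relevant) to vanish
  outside {0,1}^s.
  The random vector e = (e_0,...,e_s) is a bool list of length s+1.\<close>

definition omegas :: "nat \<Rightarrow> bool list set" where
  "omegas s = {w. length w = s}"

definition evecs :: "nat \<Rightarrow> bool list set" where
  "evecs s = {e. length e = Suc s}"

type_synonym config = "bool list \<Rightarrow> int"
type_synonym vertex = "config \<times> int"

definition delta :: "nat \<Rightarrow> config \<Rightarrow> bool list \<Rightarrow> config" where
  "delta s u e = (\<lambda>w. if length w = s then
      \<lfloor>real_of_int (u w + of_bool (e ! 0) + (\<Sum>i\<in>{1..s}. of_bool (w ! (i - 1)) * of_bool (e ! i))) / 2\<rfloor>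
    else 0)"

definition norm1 :: "nat \<Rightarrow> config \<Rightarrow> int" where
  "norm1 s u = (\<Sum>w\<in>omegas s. \<bar>u w\<bar>)"

definition trans_prob :: "nat \<Rightarrow> vertex \<Rightarrow> vertex \<Rightarrow> real" where
  "trans_prob s v v' = (case v of (u, \<sigma>) \<Rightarrow> case v' of (u', \<sigma>') \<Rightarrow>
     if \<sigma>' = \<sigma> * (-1) ^ nat (norm1 s u)
     then real (card {e \<in> evecs s. delta s u e = u'}) / 2 ^ (Suc s)
     else 0)"

definition edge :: "nat \<Rightarrow> vertex \<Rightarrow> vertex \<Rightarrow> bool" where
  "edge s v v' \<longleftrightarrow> trans_prob s v v' > 0"

definition v0 :: vertex where
  "v0 = ((\<lambda>_. 0), 1)"

definition V0 :: "nat \<Rightarrow> vertex set" where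
  "V0 s = {v. (edge s)\<^sup>*\<^sup>* v0 v}"

definition strongly_connected_on :: "nat \<Rightarrow> vertex set \<Rightarrow> bool" where
  "strongly_connected_on s V \<longleftrightarrow>
     (\<forall>v\<in>V. \<forall>v'\<in>V. \<exists>p. p \<noteq> [] \<and> hd p = v \<and> last p = v' \<and> set p \<subseteq> V \<and>
        (\<forall>i. Suc i < length p \<longrightarrow> edge s (p ! i) (p ! Suc i)))"

definition dir_cycle :: "nat \<Rightarrow> vertex set \<Rightarrow> vertex list \<Rightarrow> bool" where
  "dir_cycle s V xs \<longleftrightarrow> xs \<noteq> [] \<and> distinct xs \<and> set xs \<subseteq> V \<and>
     (\<forall>i < length xs. edge s (xs ! i) (xs ! (Suc i mod length xs)))"

definition aperiodic_on :: "nat \<Rightarrow> vertex set \<Rightarrow> bool" where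
  "aperiodic_on s V \<longleftrightarrow> Gcd {length xs | xs. dir_cycle s V xs} = 1"

definition R :: "vertex \<Rightarrow> vertex" where
  "R v = (fst v, - snd v)"

end

theory Submission
  imports Defs
begin

lemma bl_len_eq: "{xs :: bool list. length xs = n} = {xs. set xs \<subseteq> UNIV \<and> length xs = n}"
  by auto

lemma finite_bl: "finite {xs :: bool list. length xs = n}"
  unfolding bl_len_eq by (rule finite_lists_length_eq) simp

lemma card_bl: "card {xs :: bool list. length xs = n} = 2 ^ n"
  unfolding bl_len_eq by (subst card_lists_length_eq) simp_all

lemma finite_omegas: "finite (omegas s)"
  unfolding omegas_def by (rule finite_bl)

lemma finite_evecs: "finite (evecs s)"
  unfolding evecs_def by (rule finite_bl)

lemma floor_half: "\<lfloor>real_of_int x / 2\<rfloor> = x div 2"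
  using floor_divide_of_int_eq[of x 2] by simp

lemma edge_iff: "edge s (u,\<sigma>) (u',\<sigma>') \<longleftrightarrow>
   \<sigma>' = \<sigma> * (-1) ^ nat (norm1 s u) \<and> (\<exists>e\<in>evecs s. delta s u e = u')"
proof -
  have "card {e \<in> evecs s. delta s u e = u'} > 0 \<longleftrightarrow> (\<exists>e\<in>evecs s. delta s u e = u')"
    using finite_evecs[of s] by (subst card_gt_0_iff) auto
  then show ?thesis
    unfolding edge_def trans_prob_def by auto
qed

lemma delta_alt: "delta s u e w = (if length w = s then
   (u w + of_bool (e ! 0) + (\<Sum>i\<in>{1..s}. of_bool (w ! (i - 1)) * of_bool (e ! i))) div 2 else 0)"
  unfolding delta_def floor_half by simp

lemma sum_single:
  assumes "k < s" "\<And>i. i \<in> {1..s} \<Longrightarrow> e ! i = (i = Suc k)"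
  shows "(\<Sum>i\<in>{1..s}. of_bool (w ! (i - 1)) * of_bool (e ! i) :: int) = of_bool (w ! k)"
proof -
  have "(\<Sum>i\<in>{1..s}. of_bool (w ! (i - 1)) * of_bool (e ! i) :: int)
      = (\<Sum>i\<in>{1..s}. if i = Suc k then of_bool (w ! (i - 1)) else 0)"
    by (rule sum.cong) (auto simp: assms)
  also have "\<dots> = of_bool (w ! k)" using assms(1) by (subst sum.delta) auto
  finally show ?thesis .
qed

lemma sum_none:
  assumes "\<And>i. i \<in> {1..s} \<Longrightarrow> \<not> e ! i"
  shows "(\<Sum>i\<in>{1..s}. of_bool (w ! (i - 1)) * of_bool (e ! i) :: int) = 0"
  by (rule sum.neutral) (auto simp: assms)

lemma delta_zero_e: "delta s u (replicate (Suc s) False) = (\<lambda>w. if length w = s then u w div 2 else 0)"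
  by (rule ext) (simp add: delta_alt sum_none del: replicate_Suc)

definition Inv :: "nat \<Rightarrow> vertex \<Rightarrow> bool" where
  "Inv s v \<longleftrightarrow> (\<forall>w. length w \<noteq> s \<longrightarrow> fst v w = 0) \<and> (\<forall>w. 0 \<le> fst v w \<and> fst v w \<le> int s)
      \<and> (snd v = 1 \<or> snd v = -1)"

lemma neg_one_pow_cases: "(-1::int) ^ n = 1 \<or> (-1::int) ^ n = -1"
  by (cases "even n") simp_all

lemma sum_bounds:
  "0 \<le> (\<Sum>i\<in>{1..s}. of_bool (w ! (i - 1)) * of_bool (e ! i) :: int)"
  "(\<Sum>i\<in>{1..s}. of_bool (w ! (i - 1)) * of_bool (e ! i) :: int) \<le> int s"
proof -
  show "0 \<le> (\<Sum>i\<in>{1..s}. of_bool (w ! (i - 1)) * of_bool (e ! i) :: int)"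
    by (rule sum_nonneg) simp
  have "(\<Sum>i\<in>{1..s}. of_bool (w ! (i - 1)) * of_bool (e ! i) :: int) \<le> (\<Sum>i\<in>{1..s}. 1)"
    by (rule sum_mono) simp
  then show "(\<Sum>i\<in>{1..s}. of_bool (w ! (i - 1)) * of_bool (e ! i) :: int) \<le> int s" by simp
qed

lemma inv_step:
  assumes "Inv s (u,\<sigma>)" "edge s (u,\<sigma>) (u',\<sigma>')"
  shows "Inv s (u',\<sigma>')"
proof -
  from assms(2) obtain e where e: "e \<in> evecs s" "delta s u e = u'"
    and sg: "\<sigma>' = \<sigma> * (-1) ^ nat (norm1 s u)" by (auto simp: edge_iff)
  have 1: "\<forall>w. length w \<noteq> s \<longrightarrow> u' w = 0" using e(2) by (auto simp: delta_alt)
  have 2: "0 \<le> u' w \<and> u' w \<le> int s" for w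
  proof (cases "length w = s")
    case True
    let ?S = "(\<Sum>i\<in>{1..s}. of_bool (w ! (i - 1)) * of_bool (e ! i) :: int)"
    have u: "0 \<le> u w" "u w \<le> int s" using assms(1) by (auto simp: Inv_def)
    have b: "0 \<le> (of_bool (e!0)::int)" "(of_bool (e!0)::int) \<le> 1" by auto
    have "u' w = (u w + of_bool (e ! 0) + ?S) div 2" using e(2) True by (auto simp: delta_alt)
    moreover have "0 \<le> ?S" "?S \<le> int s" by (rule sum_bounds)+
    ultimately show ?thesis using u b by linarith
  next
    case False then show ?thesis using 1 by simp
  qed
  have 3: "\<sigma>' = 1 \<or> \<sigma>' = -1" using assms(1) sg neg_one_pow_cases[of "nat (norm1 s u)"]
    by (auto simp: Inv_def)
  show ?thesis using 1 2 3 by (simp add: Inv_def)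
qed

lemma inv_V0: "v \<in> V0 s \<Longrightarrow> Inv s v"
  unfolding V0_def
proof (simp, induction rule: rtranclp_induct)
  case base then show ?case by (simp add: Inv_def v0_def)
next
  case (step y z) then show ?case
    using inv_step[of s "fst y" "snd y" "fst z" "snd z"] by simp
qed

lemma zero_fun_eq: "(\<lambda>w. if length w = s then (0::int) div 2 else 0) = (\<lambda>_. 0)" by auto

lemma halve_reach:
  "\<forall>u \<sigma>. (\<forall>w. length w \<noteq> s \<longrightarrow> u w = 0) \<longrightarrow> (\<forall>w. 0 \<le> u w \<and> u w < 2 ^ n) \<longrightarrow> (\<sigma> = 1 \<or> \<sigma> = -1)
     \<longrightarrow> (\<exists>\<sigma>'. (\<sigma>' = 1 \<or> \<sigma>' = -1) \<and> (edge s)\<^sup>*\<^sup>* (u,\<sigma>) ((\<lambda>_. 0),\<sigma>'))"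
proof (induction n)
  case 0
  show ?case
  proof (intro allI impI)
    fix u :: config and \<sigma> :: int
    assume "\<forall>w. 0 \<le> u w \<and> u w < 2 ^ 0" "\<sigma> = 1 \<or> \<sigma> = -1"
    then have "u w = 0" for w by (metis power_0 int_one_le_iff_zero_less not_le order.antisym)
    then have "u = (\<lambda>_. 0)" by (auto intro!: ext)
    then show "\<exists>\<sigma>'. (\<sigma>' = 1 \<or> \<sigma>' = -1) \<and> (edge s)\<^sup>*\<^sup>* (u,\<sigma>) ((\<lambda>_. 0),\<sigma>')"
      using \<open>\<sigma> = 1 \<or> \<sigma> = -1\<close> by blast
  qed
next
  case (Suc n)
  show ?case
  proof (intro allI impI)
    fix u :: config and \<sigma> :: int
    assume a: "\<forall>w. length w \<noteq> s \<longrightarrow> u w = 0" "\<forall>w. 0 \<le> u w \<and> u w < 2 ^ Suc n" "\<sigma> = 1 \<or> \<sigma> = -1"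
    define u' where "u' = delta s u (replicate (Suc s) False)"
    define \<sigma>1 where "\<sigma>1 = \<sigma> * (-1) ^ nat (norm1 s u)"
    have ed: "edge s (u,\<sigma>) (u',\<sigma>1)"
      unfolding edge_iff u'_def \<sigma>1_def by (intro conjI refl bexI[of _ "replicate (Suc s) False"]) (simp_all add: evecs_def del: replicate_Suc)
    have u': "u' = (\<lambda>w. if length w = s then u w div 2 else 0)"
      unfolding u'_def by (rule delta_zero_e)
    have h: "0 \<le> u' w \<and> u' w < 2 ^ n" for w
    proof -
      obtain m :: int where m: "m = 2 ^ n" by blast
      have "0 \<le> u w" "u w < 2 * m" using a(2) m by auto
      then have "0 \<le> u w div 2 \<and> u w div 2 < m" by linarith
      then show ?thesis using m u' by auto
    qed
    have s1: "\<sigma>1 = 1 \<or> \<sigma>1 = -1" using a(3) neg_one_pow_cases[of "nat (norm1 s u)"]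
      by (auto simp: \<sigma>1_def)
    have "\<forall>w. length w \<noteq> s \<longrightarrow> u' w = 0" using u' by simp
    with Suc.IH h s1 obtain \<sigma>' where s': "(\<sigma>' = 1 \<or> \<sigma>' = -1)" and r: "(edge s)\<^sup>*\<^sup>* (u',\<sigma>1) ((\<lambda>_. 0),\<sigma>')"
      by blast
    have "(edge s)\<^sup>*\<^sup>* (u,\<sigma>) ((\<lambda>_. 0),\<sigma>')"
      using ed r by (rule converse_rtranclp_into_rtranclp)
    then show "\<exists>\<sigma>'. (\<sigma>' = 1 \<or> \<sigma>' = -1) \<and> (edge s)\<^sup>*\<^sup>* (u,\<sigma>) ((\<lambda>_. 0),\<sigma>')"
      using s' by blast
  qed
qed

definition Aind :: "nat \<Rightarrow> nat \<Rightarrow> config" where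
  "Aind s k = (\<lambda>w. of_bool (length w = s \<and> (\<forall>i<k. w ! i)))"

definition ev :: "nat \<Rightarrow> nat \<Rightarrow> bool list" where
  "ev s k = map (\<lambda>i. i = Suc k) [0..<Suc s]"

definition ev0 :: "nat \<Rightarrow> bool list" where
  "ev0 s = map (\<lambda>i. i \<le> 1) [0..<Suc s]"

lemma ev_nth: "i \<le> s \<Longrightarrow> ev s k ! i = (i = Suc k)"
  unfolding ev_def by (simp del: upt_Suc add: nth_map nth_upt)

lemma ev0_nth: "i \<le> s \<Longrightarrow> ev0 s ! i = (i \<le> 1)"
  unfolding ev0_def by (simp del: upt_Suc add: nth_map nth_upt)

lemma ev_evecs: "ev s k \<in> evecs s" "ev0 s \<in> evecs s"
  unfolding evecs_def ev_def ev0_def by simp_all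

lemma Aset_eq:
  assumes "k \<le> s"
  shows "{w :: bool list. length w = s \<and> (\<forall>i<k. w ! i)} = (\<lambda>v. replicate k True @ v) ` {v. length v = s - k}"
proof (rule set_eqI, rule iffI)
  fix w :: "bool list" assume w: "w \<in> {w. length w = s \<and> (\<forall>i<k. w ! i)}"
  have "take k w = replicate k True"
    using w assms by (auto intro!: nth_equalityI)
  then have "w = replicate k True @ drop k w" by (metis append_take_drop_id)
  then show "w \<in> (\<lambda>v. replicate k True @ v) ` {v. length v = s - k}"
    using w by (intro image_eqI[of _ _ "drop k w"]) auto
next
  fix w :: "bool list" assume "w \<in> (\<lambda>v. replicate k True @ v) ` {v. length v = s - k}"
  then obtain v where "w = replicate k True @ v" "length v = s - k" by auto
  then show "w \<in> {w. length w = s \<and> (\<forall>i<k. w ! i)}" using assms by (auto simp: nth_append)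
qed

lemma Aset_card:
  assumes "k \<le> s"
  shows "card {w :: bool list. length w = s \<and> (\<forall>i<k. w ! i)} = 2 ^ (s - k)"
proof -
  have "inj_on (\<lambda>v. replicate k True @ v) {v :: bool list. length v = s - k}"
    by (auto simp: inj_on_def)
  then show ?thesis unfolding Aset_eq[OF assms] by (simp add: card_image card_bl)
qed

lemma norm1_Aind:
  assumes "k \<le> s"
  shows "norm1 s (Aind s k) = 2 ^ (s - k)"
proof -
  have "norm1 s (Aind s k) = (\<Sum>w\<in>omegas s. of_bool (\<forall>i<k. w ! i))"
    unfolding norm1_def Aind_def by (rule sum.cong) (auto simp: omegas_def)
  also have "\<dots> = int (card (omegas s \<inter> {w. \<forall>i<k. w ! i}))"
    using finite_omegas by simp
  also have "omegas s \<inter> {w. \<forall>i<k. w ! i} = {w. length w = s \<and> (\<forall>i<k. w ! i)}"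
    by (auto simp: omegas_def)
  finally show ?thesis using Aset_card[OF assms] by simp
qed

lemma norm1_zero: "norm1 s (\<lambda>_. 0) = 0"
  unfolding norm1_def by simp

lemma step0:
  assumes "s \<ge> 1"
  shows "edge s ((\<lambda>_. 0), \<sigma>) (Aind s 1, \<sigma>)"
proof -
  have "delta s (\<lambda>_. 0) (ev0 s) = Aind s 1"
  proof (rule ext)
    fix w :: "bool list"
    show "delta s (\<lambda>_. 0) (ev0 s) w = Aind s 1 w"
    proof (cases "length w = s")
      case True
      have "(\<Sum>i\<in>{1..s}. of_bool (w ! (i - 1)) * of_bool (ev0 s ! i) :: int) = of_bool (w ! 0)"
        using assms by (intro sum_single) (auto simp: ev0_nth)
      then show ?thesis using True by (simp add: delta_alt ev0_nth Aind_def)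
    qed (simp add: delta_alt Aind_def)
  qed
  then show ?thesis unfolding edge_iff norm1_zero using ev_evecs by auto
qed

lemma stepk:
  assumes "k < s"
  shows "edge s (Aind s k, \<sigma>) (Aind s (Suc k), \<sigma>)"
proof -
  have "delta s (Aind s k) (ev s k) = Aind s (Suc k)"
  proof (rule ext)
    fix w :: "bool list"
    show "delta s (Aind s k) (ev s k) w = Aind s (Suc k) w"
    proof (cases "length w = s")
      case True
      have "(\<Sum>i\<in>{1..s}. of_bool (w ! (i - 1)) * of_bool (ev s k ! i) :: int) = of_bool (w ! k)"
        using assms by (intro sum_single) (auto simp: ev_nth)
      moreover have "(\<forall>i<Suc k. w ! i) = ((\<forall>i<k. w ! i) \<and> w ! k)"
        by (auto simp: less_Suc_eq)
      ultimately show ?thesis using True by (simp add: delta_alt ev_nth Aind_def)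
    qed (simp add: delta_alt Aind_def)
  qed
  moreover have "(-1::int) ^ nat (norm1 s (Aind s k)) = 1"
    using assms by (simp add: norm1_Aind nat_power_eq)
  ultimately show ?thesis unfolding edge_iff using ev_evecs by auto
qed

lemma stepfin:
  "edge s (Aind s s, \<sigma>) ((\<lambda>_. 0), - \<sigma>)"
proof -
  have "delta s (Aind s s) (replicate (Suc s) False) = (\<lambda>_. 0)"
    unfolding delta_zero_e by (auto simp: Aind_def)
  moreover have "(-1::int) ^ nat (norm1 s (Aind s s)) = -1"
    by (simp add: norm1_Aind)
  ultimately show ?thesis unfolding edge_iff
    by (intro conjI bexI[of _ "replicate (Suc s) False"]) (simp_all add: evecs_def del: replicate_Suc)
qed

lemma chain: "1 \<le> k \<Longrightarrow> k \<le> s \<Longrightarrow> (edge s)\<^sup>*\<^sup>* (Aind s 1, \<sigma>) (Aind s k, \<sigma>)"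
proof (induction k)
  case 0 then show ?case by simp
next
  case (Suc k)
  show ?case
  proof (cases "k = 0")
    case True then show ?thesis by simp
  next
    case False
    then have "(edge s)\<^sup>*\<^sup>* (Aind s 1, \<sigma>) (Aind s k, \<sigma>)" using Suc by simp
    moreover have "edge s (Aind s k, \<sigma>) (Aind s (Suc k), \<sigma>)" using Suc.prems by (intro stepk) simp
    ultimately show ?thesis by (rule rtranclp.rtrancl_into_rtrancl)
  qed
qed

lemma flip:
  assumes "s \<ge> 1"
  shows "(edge s)\<^sup>*\<^sup>* ((\<lambda>_. 0), \<sigma>) ((\<lambda>_. 0), - \<sigma>)"
proof -
  have "(edge s)\<^sup>*\<^sup>* ((\<lambda>_. 0), \<sigma>) (Aind s 1, \<sigma>)" using step0[OF assms] by blast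
  also have "(edge s)\<^sup>*\<^sup>* (Aind s 1, \<sigma>) (Aind s s, \<sigma>)" using chain assms by blast
  also have "(edge s)\<^sup>*\<^sup>* (Aind s s, \<sigma>) ((\<lambda>_. 0), - \<sigma>)" using stepfin by blast
  finally show ?thesis .
qed

lemma loop0: "edge s ((\<lambda>_. 0), \<sigma>) ((\<lambda>_. 0), \<sigma>)"
proof -
  have "delta s (\<lambda>_. 0) (replicate (Suc s) False) = (\<lambda>_. 0)"
    unfolding delta_zero_e by auto
  then show ?thesis unfolding edge_iff norm1_zero
    by (intro conjI bexI[of _ "replicate (Suc s) False"]) (simp_all add: evecs_def del: replicate_Suc)
qed

lemma back_to_v0:
  assumes "v \<in> V0 s" "s \<ge> 1"
  shows "(edge s)\<^sup>*\<^sup>* v v0"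
proof -
  obtain u \<sigma> where v: "v = (u, \<sigma>)" by force
  have I: "Inv s (u,\<sigma>)" using inv_V0 assms(1) v by simp
  have "int s < 2 ^ s" using less_exp[of s] by (metis of_nat_less_iff of_nat_numeral of_nat_power)
  moreover have "\<forall>w. 0 \<le> u w \<and> u w \<le> int s" using I by (simp add: Inv_def)
  ultimately have "\<forall>w. 0 \<le> u w \<and> u w < 2 ^ s" by (meson order_le_less_trans)
  moreover have "\<forall>w. length w \<noteq> s \<longrightarrow> u w = 0" "\<sigma> = 1 \<or> \<sigma> = -1" using I by (auto simp: Inv_def)
  ultimately obtain \<sigma>' where s': "\<sigma>' = 1 \<or> \<sigma>' = -1" and r: "(edge s)\<^sup>*\<^sup>* (u,\<sigma>) ((\<lambda>_. 0),\<sigma>')"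
    using halve_reach[of s s] by blast
  have "(edge s)\<^sup>*\<^sup>* ((\<lambda>_. 0),\<sigma>') v0"
    using s' flip[OF assms(2), of "-1"] by (auto simp: v0_def)
  then show ?thesis using r v by simp
qed

lemma path_exists:
  assumes "(edge s)\<^sup>*\<^sup>* a b"
  shows "\<exists>p. p \<noteq> [] \<and> hd p = a \<and> last p = b \<and> (\<forall>x\<in>set p. (edge s)\<^sup>*\<^sup>* a x) \<and>
        (\<forall>i. Suc i < length p \<longrightarrow> edge s (p ! i) (p ! Suc i))"
  using assms
proof (induction rule: rtranclp_induct)
  case base
  show ?case by (intro exI[of _ "[a]"]) auto
next
  case (step y z)
  then obtain p where p: "p \<noteq> []" "hd p = a" "last p = y" "\<forall>x\<in>set p. (edge s)\<^sup>*\<^sup>* a x"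
    "\<forall>i. Suc i < length p \<longrightarrow> edge s (p ! i) (p ! Suc i)" by blast
  have e: "edge s ((p @ [z]) ! i) ((p @ [z]) ! Suc i)" if "Suc i < length (p @ [z])" for i
  proof (cases "Suc i < length p")
    case True then show ?thesis using p(5) by (simp add: nth_append)
  next
    case False
    then have "Suc i = length p" using that by simp
    then have "i = length p - 1" by simp
    then have "p ! i = last p" using p(1) by (simp add: last_conv_nth)
    then show ?thesis using \<open>Suc i = length p\<close> p(3) step.hyps(2) by (simp add: nth_append)
  qed
  show ?case
    using p step by (intro exI[of _ "p @ [z]"]) (auto simp: e)
qed

lemma edge_R: "edge s a b \<Longrightarrow> edge s (R a) (R b)"
  by (cases a; cases b) (simp add: R_def edge_iff)

lemma rtr_R: "(edge s)\<^sup>*\<^sup>* a b \<Longrightarrow> (edge s)\<^sup>*\<^sup>* (R a) (R b)"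
proof (induction rule: rtranclp_induct)
  case base then show ?case by simp
next
  case (step y z) then show ?case using edge_R by (meson rtranclp.rtrancl_into_rtrancl)
qed

theorem proposition2p3:
  fixes s :: nat
  assumes "s \<ge> 2"
  shows "finite (V0 s) \<and> strongly_connected_on s (V0 s) \<and> aperiodic_on s (V0 s)
         \<and> R ` (V0 s) = V0 s"
proof (intro conjI)
  have s1: "s \<ge> 1" using assms by simp
  have sub: "V0 s \<subseteq> {f. \<forall>x. (x \<in> omegas s \<longrightarrow> f x \<in> {0..int s}) \<and> (x \<notin> omegas s \<longrightarrow> f x = 0)} \<times> {1, -1}"
  proof
    fix v assume "v \<in> V0 s"
    then have "Inv s v" by (rule inv_V0)
    then show "v \<in> {f. \<forall>x. (x \<in> omegas s \<longrightarrow> f x \<in> {0..int s}) \<and> (x \<notin> omegas s \<longrightarrow> f x = 0)} \<times> {1, -1}"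
      by (cases v) (auto simp: Inv_def omegas_def)
  qed
  show "finite (V0 s)"
    by (rule finite_subset[OF sub]) (intro finite_cartesian_product finite_set_of_finite_funs finite_omegas; simp)
  show "strongly_connected_on s (V0 s)"
    unfolding strongly_connected_on_def
  proof (intro ballI)
    fix v v' assume v: "v \<in> V0 s" and v': "v' \<in> V0 s"
    have "(edge s)\<^sup>*\<^sup>* v v0" using back_to_v0[OF v s1] .
    also have "(edge s)\<^sup>*\<^sup>* v0 v'" using v' by (simp add: V0_def)
    finally obtain p where p: "p \<noteq> []" "hd p = v" "last p = v'" "\<forall>x\<in>set p. (edge s)\<^sup>*\<^sup>* v x"
      "\<forall>i. Suc i < length p \<longrightarrow> edge s (p ! i) (p ! Suc i)" using path_exists by blast
    have "set p \<subseteq> V0 s"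
    proof
      fix x assume "x \<in> set p"
      then have "(edge s)\<^sup>*\<^sup>* v x" using p(4) by blast
      then show "x \<in> V0 s" using v by (auto simp: V0_def)
    qed
    then show "\<exists>p. p \<noteq> [] \<and> hd p = v \<and> last p = v' \<and> set p \<subseteq> V0 s \<and>
        (\<forall>i. Suc i < length p \<longrightarrow> edge s (p ! i) (p ! Suc i))" using p by blast
  qed
  show "aperiodic_on s (V0 s)"
    unfolding aperiodic_on_def
  proof -
    have "dir_cycle s (V0 s) [v0]"
      unfolding dir_cycle_def using loop0[of s 1] by (simp add: V0_def v0_def)
    then have "1 \<in> {length xs | xs. dir_cycle s (V0 s) xs}" by force
    then have "Gcd {length xs | xs. dir_cycle s (V0 s) xs} dvd 1" by (rule Gcd_dvd)
    then show "Gcd {length xs | xs. dir_cycle s (V0 s) xs} = 1" by simp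
  qed
  have RV: "R v \<in> V0 s" if "v \<in> V0 s" for v
  proof -
    have "(edge s)\<^sup>*\<^sup>* v0 (R v0)" using flip[OF s1, of 1] by (simp add: v0_def R_def)
    also have "(edge s)\<^sup>*\<^sup>* (R v0) (R v)" using that by (intro rtr_R) (simp add: V0_def)
    finally show ?thesis by (simp add: V0_def)
  qed
  show "R ` V0 s = V0 s"
  proof
    show "R ` V0 s \<subseteq> V0 s" using RV by blast
    show "V0 s \<subseteq> R ` V0 s"
    proof
      fix v assume "v \<in> V0 s"
      then have "R v \<in> V0 s" by (rule RV)
      moreover have "R (R v) = v" by (simp add: R_def)
      ultimately show "v \<in> R ` V0 s" by (metis imageI)
    qed
  qed
qed

end
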